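(* Let $a<b$ be real numbers and let $\eta\in\mathcal{C}^{1}[a,b]$ be a real function with $\eta'(a)\neq\eta'(b)$. For parameters $\alpha,\beta,\kappa$ define the modified, dampened function $$\eta^{\alpha}_{\beta,\kappa}(x)=e^{-\alpha x}\bigl(\eta(x)+\beta x+\kappa\bigr),\qquad x\in[a,b].$$ Then for any $\beta\notin\{-\eta'(a),-\eta'(b)\}$, the choices $$\alpha=\frac{1}{b-a}\log\left(\frac{\eta'(b)+\beta}{\eta'(a)+\beta}\right),\qquad \kappa=\frac{e^{-\alpha b}\bigl(\eta(b)+\beta b\bigr)-e^{-\alpha a}\bigl(\eta(a)+\beta a\bigr)}{e^{-\alpha a}-e^{-\alpha b}}$$ solve the system of (nonlinear) equations $$\eta^{\alpha}_{\beta,\kappa}(a)=\eta^{\alpha}_{\beta,\kappa}(b),\qquad \frac{d\eta^{\alpha}_{\beta,\kappa}}{dx}(a)=\frac{d\eta^{\alpha}_{\beta,\kappa}}{dx}(b).$$ In addition, if $\beta>\max\bigl(|\eta'(b)|,|\eta'(a)|\bigr)$, then $\alpha\in\mathbb{R}$ and $\kappa\in\mathbb{R}$.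
   Context: Here $\log$ denotes a (possibly complex) logarithm; when the ratio inside it is not a positive real number, $\alpha$ (and hence $\kappa$) may be complex. *)

theory Defs
  imports "HOL-Analysis.Analysis"
begin

text \<open>The modified, dampened function
  eta^alpha_{beta,kappa}(x) = exp(-alpha x) (eta(x) + beta x + kappa),
  complex-valued since alpha and kappa may be complex.\<close>
definition damped :: "(real \<Rightarrow> real) \<Rightarrow> complex \<Rightarrow> real \<Rightarrow> complex \<Rightarrow> real \<Rightarrow> complex" where
  "damped \<eta> \<alpha> \<beta> \<kappa> x =
     exp (- \<alpha> * complex_of_real x) * (complex_of_real (\<eta> x + \<beta> * x) + \<kappa>)"

end

theory Submission
  imports Defs
begin

lemma damped_deriv:
  assumes "(\<eta> has_real_derivative e) (at x within S)"
  shows "(damped \<eta> \<alpha> \<beta> \<kappa> has_vector_derivative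
     (exp (- \<alpha> * complex_of_real x) * complex_of_real (e + \<beta>)
      + exp (- \<alpha> * complex_of_real x) * (- \<alpha>) * (complex_of_real (\<eta> x + \<beta> * x) + \<kappa>))) (at x within S)"
proof -
  have E: "((\<lambda>x. exp (- \<alpha> * complex_of_real x)) has_vector_derivative
      exp (- \<alpha> * complex_of_real x) * (- \<alpha>)) (at x within S)"
    by (rule has_vector_derivative_real_field) (auto intro!: derivative_eq_intros)
  have F: "((\<lambda>x. complex_of_real (\<eta> x + \<beta> * x) + \<kappa>) has_vector_derivative
      complex_of_real (e + \<beta>)) (at x within S)"
    by (auto intro!: derivative_eq_intros assms)
  show ?thesis
    unfolding damped_def[abs_def]
    using has_vector_derivative_mult[OF E F] by simp
qed

theorem lemma1:
  fixes \<eta> \<eta>' :: "real \<Rightarrow> real" and a b \<beta> :: real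
  assumes "a < b"
    and deriv: "\<And>x. x \<in> {a..b} \<Longrightarrow> (\<eta> has_real_derivative \<eta>' x) (at x within {a..b})"
    and cont: "continuous_on {a..b} \<eta>'"
    and neq: "\<eta>' a \<noteq> \<eta>' b"
    and beta: "\<beta> \<noteq> - \<eta>' a" "\<beta> \<noteq> - \<eta>' b"
  defines "\<alpha> \<equiv> Ln (complex_of_real ((\<eta>' b + \<beta>) / (\<eta>' a + \<beta>))) / complex_of_real (b - a)"
  defines "\<kappa> \<equiv> (exp (- \<alpha> * complex_of_real b) * complex_of_real (\<eta> b + \<beta> * b)
                 - exp (- \<alpha> * complex_of_real a) * complex_of_real (\<eta> a + \<beta> * a))
               / (exp (- \<alpha> * complex_of_real a) - exp (- \<alpha> * complex_of_real b))"
  shows "damped \<eta> \<alpha> \<beta> \<kappa> a = damped \<eta> \<alpha> \<beta> \<kappa> b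
      \<and> (\<exists>d. (damped \<eta> \<alpha> \<beta> \<kappa> has_vector_derivative d) (at a within {a..b})
             \<and> (damped \<eta> \<alpha> \<beta> \<kappa> has_vector_derivative d) (at b within {a..b}))
      \<and> (\<beta> > max \<bar>\<eta>' b\<bar> \<bar>\<eta>' a\<bar> \<longrightarrow> \<alpha> \<in> \<real> \<and> \<kappa> \<in> \<real>)"
proof -
  define r where "r = (\<eta>' b + \<beta>) / (\<eta>' a + \<beta>)"
  have pa: "\<eta>' a + \<beta> \<noteq> 0" "\<eta>' b + \<beta> \<noteq> 0" using beta by auto
  have r0: "r \<noteq> 0" using pa by (simp add: r_def)
  have r1: "r \<noteq> 1" using pa neq by (auto simp: r_def field_simps)
  define Ea where "Ea = exp (- \<alpha> * complex_of_real a)"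
  define Eb where "Eb = exp (- \<alpha> * complex_of_real b)"
  have ba: "complex_of_real (b - a) \<noteq> 0" using \<open>a < b\<close> by simp
  have "\<alpha> * complex_of_real (b - a) = Ln (complex_of_real r)"
    using ba by (simp add: \<alpha>_def r_def)
  hence h: "exp (\<alpha> * complex_of_real (b - a)) = complex_of_real r"
    using r0 by simp
  have EaEb: "Ea = complex_of_real r * Eb"
  proof -
    have "- \<alpha> * complex_of_real a = \<alpha> * complex_of_real (b - a) + (- \<alpha> * complex_of_real b)"
      by (simp add: algebra_simps)
    thus ?thesis unfolding Ea_def Eb_def by (simp only: exp_add h)
  qed
  have Eb0: "Eb \<noteq> 0" by (simp add: Eb_def)
  have den: "Ea - Eb \<noteq> 0"
  proof
    assume "Ea - Eb = 0"
    hence "(complex_of_real r - 1) * Eb = 0" using EaEb by (simp add: algebra_simps)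
    thus False using Eb0 r1 by simp
  qed
  have kap: "\<kappa> = (Eb * complex_of_real (\<eta> b + \<beta> * b) - Ea * complex_of_real (\<eta> a + \<beta> * a)) / (Ea - Eb)"
    by (simp add: \<kappa>_def Ea_def Eb_def)
  have eq1: "damped \<eta> \<alpha> \<beta> \<kappa> a = damped \<eta> \<alpha> \<beta> \<kappa> b"
    unfolding damped_def Ea_def[symmetric] Eb_def[symmetric] kap
    using den by (simp add: field_simps)
  have da: "(\<eta> has_real_derivative \<eta>' a) (at a within {a..b})"
    and db: "(\<eta> has_real_derivative \<eta>' b) (at b within {a..b})"
    using deriv \<open>a < b\<close> by auto
  have deq: "Ea * complex_of_real (\<eta>' a + \<beta>) = Eb * complex_of_real (\<eta>' b + \<beta>)"
  proof -
    have c: "complex_of_real (\<eta>' a + \<beta>) \<noteq> 0" using pa by (simp only: of_real_eq_0_iff) simp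
    have "complex_of_real r = complex_of_real (\<eta>' b + \<beta>) / complex_of_real (\<eta>' a + \<beta>)"
      by (simp add: r_def)
    thus ?thesis using EaEb c by (simp add: field_simps)
  qed
  have ex: "\<exists>d. (damped \<eta> \<alpha> \<beta> \<kappa> has_vector_derivative d) (at a within {a..b})
             \<and> (damped \<eta> \<alpha> \<beta> \<kappa> has_vector_derivative d) (at b within {a..b})"
  proof (intro exI conjI)
    show "(damped \<eta> \<alpha> \<beta> \<kappa> has_vector_derivative
      (Ea * complex_of_real (\<eta>' a + \<beta>) + (- \<alpha>) * damped \<eta> \<alpha> \<beta> \<kappa> a)) (at a within {a..b})"
      using damped_deriv[OF da, of \<alpha> \<beta> \<kappa>] by (simp add: damped_def Ea_def algebra_simps)
    show "(damped \<eta> \<alpha> \<beta> \<kappa> has_vector_derivative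
      (Ea * complex_of_real (\<eta>' a + \<beta>) + (- \<alpha>) * damped \<eta> \<alpha> \<beta> \<kappa> a)) (at b within {a..b})"
      unfolding deq eq1
      using damped_deriv[OF db, of \<alpha> \<beta> \<kappa>] by (simp add: damped_def Eb_def algebra_simps)
  qed
  have real: "\<alpha> \<in> \<real> \<and> \<kappa> \<in> \<real>" if "\<beta> > max \<bar>\<eta>' b\<bar> \<bar>\<eta>' a\<bar>"
  proof -
    have "r > 0" using that by (auto simp: r_def intro!: divide_pos_pos)
    hence "Ln (complex_of_real r) = complex_of_real (ln r)" by (simp add: Ln_of_real)
    hence al: "\<alpha> = complex_of_real (ln r / (b - a))" by (simp add: \<alpha>_def r_def)
    have "Ea = complex_of_real (exp (- (ln r / (b - a)) * a))"
      "Eb = complex_of_real (exp (- (ln r / (b - a)) * b))"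
    proof -
      have "- \<alpha> * complex_of_real a = complex_of_real (- (ln r / (b - a)) * a)"
           "- \<alpha> * complex_of_real b = complex_of_real (- (ln r / (b - a)) * b)"
        by (simp_all add: al)
      thus "Ea = complex_of_real (exp (- (ln r / (b - a)) * a))"
        "Eb = complex_of_real (exp (- (ln r / (b - a)) * b))"
        unfolding Ea_def Eb_def by (simp_all only: exp_of_real)
    qed
    thus ?thesis unfolding kap by (simp add: al)
  qed
  show ?thesis using eq1 ex real by blast
qed

end
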